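(* Let $P$ be a program and $G$ a goal. If every SLD derivation of $G$ in $P$ is finite, independently of the selection rule used (i.e. for arbitrary choices of the selected atom at each step), then every RSLD derivation of $G$ in $P$ is finite.
   Context: Goals are finite lists of atoms; a clause is $h\leftarrow B$ with $h$ an atom and $B$ a goal; a program is a finite set of clauses. For goals regarded as lists, $N\subseteq_L G$ means $N$ is a subsequence of $G$, and $G-N$ denotes the list of deleted atoms. $var(E)$ is the set of variables of $E$. If $G=a_1,\dots,a_k$, $c=(h\leftarrow B)$, $\xi$ a renaming and $\theta$ an idempotent relevant mgu of $h\xi$ and some $a_i$, then $(a_1,\dots,a_{i-1},B\xi,a_{i+1},\dots,a_k)\theta$ is a resolvent of $G$ and $c$. An SLD derivation of $G_0$ in $P$ is a finite or infinite sequence $G_0\xrightarrow{c_0\xi_0,\theta_0}G_1\xrightarrow{c_1\xi_1,\theta_1}\cdots$ of such steps with $c_j\in P$ and $var(c_j\xi_j)\cap(var(G_0)\cup var(c_0\xi_0)\cup\dots\cup var(c_{j-1}\xi_{j-1}))=\emptyset$. Reduced goal: $N$ is a reduced goal of $G$ by the substitution $\tau$ up to the variable set $X$, written $G>>^{\tau}N$, if (i) $N\subseteq_L G$, (ii) for every atom $b$ of $G-N$, $b\tau$ occurs in $N$, (iii) $x\tau=x$ for every $x\in var(N)\cup X$. RSLD derivation of $G_0$ in $P$: a finite or infinite sequence $G_0>>^{\alpha_0}N_0\xrightarrow{c_0\xi_0,\theta_0}G_1>>^{\alpha_1}N_1\xrightarrow{c_1\xi_1,\theta_1}G_2\cdots$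 where each $N_j\xrightarrow{c_j\xi_j,\theta_j}G_{j+1}$ is an SLD resolution step with $c_j\in P$, $var(c_j\xi_j)\cap(var(G_0)\cup var(c_0\xi_0)\cup\dots\cup var(c_{j-1}\xi_{j-1}))=\emptyset$, and $G_j>>^{\alpha_j}N_j$ up to $var(G_0\theta_0\cdots\theta_{j-1})$. *)

theory Defs
  imports Main
begin

datatype ('f, 'v) trm = Var 'v | Fn 'f "('f, 'v) trm list"

type_synonym ('p, 'f, 'v) atom = "'p \<times> ('f, 'v) trm list"
type_synonym ('p, 'f, 'v) goal = "('p, 'f, 'v) atom list"
type_synonym ('p, 'f, 'v) clause = "('p, 'f, 'v) atom \<times> ('p, 'f, 'v) goal"

type_synonym ('f, 'v) subst = "'v \<Rightarrow> ('f, 'v) trm"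

fun vars_t :: "('f, 'v) trm \<Rightarrow> 'v set" where
  "vars_t (Var x) = {x}"
| "vars_t (Fn f ts) = (\<Union>t\<in>set ts. vars_t t)"

definition vars_a :: "('p, 'f, 'v) atom \<Rightarrow> 'v set" where
  "vars_a a = (\<Union>t\<in>set (snd a). vars_t t)"

definition vars_g :: "('p, 'f, 'v) goal \<Rightarrow> 'v set" where
  "vars_g G = (\<Union>a\<in>set G. vars_a a)"

definition vars_c :: "('p, 'f, 'v) clause \<Rightarrow> 'v set" where
  "vars_c c = vars_a (fst c) \<union> vars_g (snd c)"

fun subst_t :: "('f, 'v) subst \<Rightarrow> ('f, 'v) trm \<Rightarrow> ('f, 'v) trm" where
  "subst_t \<sigma> (Var x) = \<sigma> x"
| "subst_t \<sigma> (Fn f ts) = Fn f (map (subst_t \<sigma>) ts)"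

definition subst_a :: "('f, 'v) subst \<Rightarrow> ('p, 'f, 'v) atom \<Rightarrow> ('p, 'f, 'v) atom" where
  "subst_a \<sigma> a = (fst a, map (subst_t \<sigma>) (snd a))"

definition subst_g :: "('f, 'v) subst \<Rightarrow> ('p, 'f, 'v) goal \<Rightarrow> ('p, 'f, 'v) goal" where
  "subst_g \<sigma> G = map (subst_a \<sigma>) G"

definition subst_c :: "('f, 'v) subst \<Rightarrow> ('p, 'f, 'v) clause \<Rightarrow> ('p, 'f, 'v) clause" where
  "subst_c \<sigma> c = (subst_a \<sigma> (fst c), subst_g \<sigma> (snd c))"

text \<open>Composition: apply sigma first, then tau (E (sigma tau) = (E sigma) tau).\<close>
definition comp_s :: "('f, 'v) subst \<Rightarrow> ('f, 'v) subst \<Rightarrow> ('f, 'v) subst" where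
  "comp_s \<sigma> \<tau> = (\<lambda>x. subst_t \<tau> (\<sigma> x))"

definition sdom :: "('f, 'v) subst \<Rightarrow> 'v set" where
  "sdom \<sigma> = {x. \<sigma> x \<noteq> Var x}"

definition srange_vars :: "('f, 'v) subst \<Rightarrow> 'v set" where
  "srange_vars \<sigma> = (\<Union>x\<in>sdom \<sigma>. vars_t (\<sigma> x))"

definition idempotent :: "('f, 'v) subst \<Rightarrow> bool" where
  "idempotent \<sigma> \<longleftrightarrow> comp_s \<sigma> \<sigma> = \<sigma>"

definition unifier :: "('f, 'v) subst \<Rightarrow> ('p, 'f, 'v) atom \<Rightarrow> ('p, 'f, 'v) atom \<Rightarrow> bool" where
  "unifier \<sigma> a b \<longleftrightarrow> subst_a \<sigma> a = subst_a \<sigma> b"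

definition mgu :: "('f, 'v) subst \<Rightarrow> ('p, 'f, 'v) atom \<Rightarrow> ('p, 'f, 'v) atom \<Rightarrow> bool" where
  "mgu \<theta> a b \<longleftrightarrow> unifier \<theta> a b \<and> (\<forall>\<sigma>. unifier \<sigma> a b \<longrightarrow> (\<exists>\<gamma>. \<sigma> = comp_s \<theta> \<gamma>))"

definition relevant :: "('f, 'v) subst \<Rightarrow> ('p, 'f, 'v) atom \<Rightarrow> ('p, 'f, 'v) atom \<Rightarrow> bool" where
  "relevant \<theta> a b \<longleftrightarrow> sdom \<theta> \<union> srange_vars \<theta> \<subseteq> vars_a a \<union> vars_a b"

definition renaming :: "('f, 'v) subst \<Rightarrow> bool" where
  "renaming \<xi> \<longleftrightarrow> (\<exists>\<pi>. bij \<pi> \<and> \<xi> = (\<lambda>x. Var (\<pi> x)))"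

definition sld_step ::
  "('p, 'f, 'v) goal \<Rightarrow> ('p, 'f, 'v) clause \<Rightarrow> ('f, 'v) subst \<Rightarrow> ('f, 'v) subst
   \<Rightarrow> ('p, 'f, 'v) goal \<Rightarrow> bool" where
  "sld_step G c \<xi> \<theta> G' \<longleftrightarrow> renaming \<xi> \<and>
     (\<exists>i < length G.
        idempotent \<theta> \<and> mgu \<theta> (subst_a \<xi> (fst c)) (G ! i) \<and>
        relevant \<theta> (subst_a \<xi> (fst c)) (G ! i) \<and>
        G' = subst_g \<theta> (take i G @ subst_g \<xi> (snd c) @ drop (Suc i) G))"

definition std_apart ::
  "('p, 'f, 'v) goal \<Rightarrow> (nat \<Rightarrow> ('p, 'f, 'v) clause) \<Rightarrow> (nat \<Rightarrow> ('f, 'v) subst) \<Rightarrow> nat \<Rightarrow> bool" where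
  "std_apart G0 cs \<xi>s j \<longleftrightarrow>
     vars_c (subst_c (\<xi>s j) (cs j)) \<inter>
       (vars_g G0 \<union> (\<Union>k<j. vars_c (subst_c (\<xi>s k) (cs k)))) = {}"

definition inf_sld_derivation ::
  "('p, 'f, 'v) clause set \<Rightarrow> ('p, 'f, 'v) goal \<Rightarrow> (nat \<Rightarrow> ('p, 'f, 'v) goal)
   \<Rightarrow> (nat \<Rightarrow> ('p, 'f, 'v) clause) \<Rightarrow> (nat \<Rightarrow> ('f, 'v) subst) \<Rightarrow> (nat \<Rightarrow> ('f, 'v) subst) \<Rightarrow> bool" where
  "inf_sld_derivation P G0 Gs cs \<xi>s \<theta>s \<longleftrightarrow> Gs 0 = G0 \<and>
     (\<forall>j. cs j \<in> P \<and> sld_step (Gs j) (cs j) (\<xi>s j) (\<theta>s j) (Gs (Suc j)) \<and> std_apart G0 cs \<xi>s j)"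

text \<open>N is a reduced goal of G by tau up to X. The subsequence N is given by
  the set I of kept positions; G - N is the list of the deleted atoms.\<close>
definition reduced ::
  "('p, 'f, 'v) goal \<Rightarrow> ('f, 'v) subst \<Rightarrow> 'v set \<Rightarrow> ('p, 'f, 'v) goal \<Rightarrow> bool" where
  "reduced G \<tau> X N \<longleftrightarrow> (\<exists>I. N = nths G I \<and>
      (\<forall>b\<in>set (nths G (- I)). subst_a \<tau> b \<in> set N) \<and>
      (\<forall>x\<in>vars_g N \<union> X. \<tau> x = Var x))"

text \<open>theta_0 ... theta_(j-1)\<close>
fun comp_upto :: "(nat \<Rightarrow> ('f, 'v) subst) \<Rightarrow> nat \<Rightarrow> ('f, 'v) subst" where
  "comp_upto \<theta>s 0 = Var"
| "comp_upto \<theta>s (Suc j) = comp_s (comp_upto \<theta>s j) (\<theta>s j)"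

definition inf_rsld_derivation ::
  "('p, 'f, 'v) clause set \<Rightarrow> ('p, 'f, 'v) goal \<Rightarrow> (nat \<Rightarrow> ('p, 'f, 'v) goal)
   \<Rightarrow> (nat \<Rightarrow> ('p, 'f, 'v) goal) \<Rightarrow> (nat \<Rightarrow> ('f, 'v) subst)
   \<Rightarrow> (nat \<Rightarrow> ('p, 'f, 'v) clause) \<Rightarrow> (nat \<Rightarrow> ('f, 'v) subst) \<Rightarrow> (nat \<Rightarrow> ('f, 'v) subst) \<Rightarrow> bool" where
  "inf_rsld_derivation P G0 Gs Ns \<alpha>s cs \<xi>s \<theta>s \<longleftrightarrow> Gs 0 = G0 \<and>
     (\<forall>j. reduced (Gs j) (\<alpha>s j) (vars_g (subst_g (comp_upto \<theta>s j) G0)) (Ns j) \<and>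
          cs j \<in> P \<and> sld_step (Ns j) (cs j) (\<xi>s j) (\<theta>s j) (Gs (Suc j)) \<and>
          std_apart G0 cs \<xi>s j)"

end

theory Submission
  imports Defs "HOL-Library.Sublist"
begin

lemma key_subseq:
  assumes "subseq N H" "i < length N"
  shows "\<exists>i'<length H. H ! i' = N ! i \<and>
     (\<forall>B. subseq (take i N @ B @ drop (Suc i) N) (take i' H @ B @ drop (Suc i') H))"
proof -
  have N: "N = take i N @ (N ! i # drop (Suc i) N)"
    using assms(2) by (simp add: Cons_nth_drop_Suc)
  have s0: "subseq (take i N @ (N ! i # drop (Suc i) N)) H" using assms(1) N by metis
  obtain us vs where H1: "H = us @ vs" and e1: "subseq (take i N) us"
    and e2: "subseq (N ! i # drop (Suc i) N) vs"
    using list_emb_appendD[OF s0] by blast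
  obtain us' v vs' where vs: "vs = us' @ v # vs'" and v: "N ! i = v"
    and e3: "subseq (drop (Suc i) N) vs'"
    using list_emb_ConsD[OF e2] by blast
  define i' where "i' = length (us @ us')"
  have H: "H = (us @ us') @ v # vs'" using H1 vs by simp
  have t: "take i' H = us @ us'" and d: "drop (Suc i') H = vs'" and n: "H ! i' = v"
    and l: "i' < length H"
    unfolding i'_def H by simp_all
  have e4: "subseq (take i N) (us @ us')" using e1 subseq_rev_drop_many by blast
  show ?thesis
  proof (intro exI[of _ i'] conjI allI)
    fix B
    show "subseq (take i N @ B @ drop (Suc i) N) (take i' H @ B @ drop (Suc i') H)"
      unfolding t d using e4 e3 by (intro list_emb_append_mono) auto
  qed (use l n v in auto)
qed

lemma step_lift:
  assumes "subseq N H" "sld_step N c \<xi> \<theta> G'"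
  shows "\<exists>H'. sld_step H c \<xi> \<theta> H' \<and> subseq G' H'"
proof -
  from assms(2) obtain i where r: "renaming \<xi>" and i: "i < length N" and
    idem: "idempotent \<theta>" and m: "mgu \<theta> (subst_a \<xi> (fst c)) (N ! i)" and
    rel: "relevant \<theta> (subst_a \<xi> (fst c)) (N ! i)" and
    G': "G' = subst_g \<theta> (take i N @ subst_g \<xi> (snd c) @ drop (Suc i) N)"
    unfolding sld_step_def by blast
  obtain i' where i': "i' < length H" "H ! i' = N ! i" and
    s: "\<And>B. subseq (take i N @ B @ drop (Suc i) N) (take i' H @ B @ drop (Suc i') H)"
    using key_subseq[OF assms(1) i] by blast
  define H' where "H' = subst_g \<theta> (take i' H @ subst_g \<xi> (snd c) @ drop (Suc i') H)"
  have "sld_step H c \<xi> \<theta> H'"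
    unfolding sld_step_def H'_def using r i' idem m rel by auto
  moreover have "subseq G' H'"
    unfolding G' H'_def subst_g_def by (rule subseq_map[OF s])
  ultimately show ?thesis by blast
qed

lemma reduced_subseq: "reduced G \<tau> X N \<Longrightarrow> subseq N G"
  unfolding reduced_def using subseq_conv_nths by blast

theorem theoremt1p1p1:
  fixes P :: "('p, 'f, 'v) clause set" and G :: "('p, 'f, 'v) goal"
  assumes "finite P"
    and "infinite (UNIV :: 'v set)"
    and "\<not> (\<exists>Gs cs \<xi>s \<theta>s. inf_sld_derivation P G Gs cs \<xi>s \<theta>s)"
  shows "\<not> (\<exists>Gs Ns \<alpha>s cs \<xi>s \<theta>s. inf_rsld_derivation P G Gs Ns \<alpha>s cs \<xi>s \<theta>s)"
proof
  assume "\<exists>Gs Ns \<alpha>s cs \<xi>s \<theta>s. inf_rsld_derivation P G Gs Ns \<alpha>s cs \<xi>s \<theta>s"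
  then obtain Gs Ns \<alpha>s cs \<xi>s \<theta>s where D: "inf_rsld_derivation P G Gs Ns \<alpha>s cs \<xi>s \<theta>s"
    by blast
  have G0: "Gs 0 = G" and
    R: "\<And>j. reduced (Gs j) (\<alpha>s j) (vars_g (subst_g (comp_upto \<theta>s j) G)) (Ns j)" and
    C: "\<And>j. cs j \<in> P" and S: "\<And>j. sld_step (Ns j) (cs j) (\<xi>s j) (\<theta>s j) (Gs (Suc j))" and
    A: "\<And>j. std_apart G cs \<xi>s j"
    using D unfolding inf_rsld_derivation_def by auto
  define Hs where "Hs = rec_nat G (\<lambda>j Hj. SOME H'. sld_step Hj (cs j) (\<xi>s j) (\<theta>s j) H' \<and>
      subseq (Gs (Suc j)) H')"
  have H0: "Hs 0 = G" unfolding Hs_def by simp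
  have HS: "\<And>j. Hs (Suc j) = (SOME H'. sld_step (Hs j) (cs j) (\<xi>s j) (\<theta>s j) H' \<and>
      subseq (Gs (Suc j)) H')" unfolding Hs_def by simp
  have inv: "subseq (Gs j) (Hs j) \<and> (\<exists>H'. sld_step (Hs j) (cs j) (\<xi>s j) (\<theta>s j) H' \<and>
      subseq (Gs (Suc j)) H')" for j
  proof (induction j)
    case 0
    have "subseq (Gs 0) (Hs 0)" using G0 H0 by simp
    moreover have "subseq (Ns 0) (Hs 0)"
      by (rule subseq_order.order_trans[OF reduced_subseq[OF R] calculation])
    ultimately show ?case using step_lift[OF _ S] by blast
  next
    case (Suc j)
    have "subseq (Gs (Suc j)) (Hs (Suc j))"
      using someI_ex[OF Suc.IH[THEN conjunct2]] HS by simp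
    moreover have "subseq (Ns (Suc j)) (Hs (Suc j))"
      by (rule subseq_order.order_trans[OF reduced_subseq[OF R] calculation])
    ultimately show ?case using step_lift[OF _ S] by blast
  qed
  have "\<And>j. sld_step (Hs j) (cs j) (\<xi>s j) (\<theta>s j) (Hs (Suc j))"
    using someI_ex[OF inv[THEN conjunct2]] HS by simp
  then have "inf_sld_derivation P G Hs cs \<xi>s \<theta>s"
    unfolding inf_sld_derivation_def using H0 C A by blast
  then show False using assms(3) by blast
qed

end
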